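(* Let $p$ be an odd prime and $G$ a finite $p$-group. Then $G$ is a $2$-closed group if and only if $G$ is cyclic.
   Context: Permutations act on the right. For $X\leq{\rm Sym}(\Omega)$, the $2$-closure of $X$ on $\Omega$ is $X^{(2),\Omega}=\{\theta\in{\rm Sym}(\Omega)\mid \forall \alpha,\beta\in\Omega\ \exists g\in X:\ \alpha^\theta=\alpha^g,\ \beta^\theta=\beta^g\}$. An abstract group $G$ is called a $2$-closed group if $H=H^{(2),\Omega}$ for every set $\Omega$ and every subgroup $H\leq{\rm Sym}(\Omega)$ with $H\cong G$. *)

theory Defs
  imports "HOL-Algebra.Algebra"
begin

definition two_closure :: "'b set \<Rightarrow> ('b \<Rightarrow> 'b) set \<Rightarrow> ('b \<Rightarrow> 'b) set" where
  "two_closure \<Omega> H = {\<theta> \<in> Bij \<Omega>. \<forall>\<alpha>\<in>\<Omega>. \<forall>\<beta>\<in>\<Omega>. \<exists>g\<in>H. \<theta> \<alpha> = g \<alpha> \<and> \<theta> \<beta> = g \<beta>}"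

text \<open>G is 2-closed, where the sets Omega range over all subsets of the type 'b.\<close>

definition two_closed_group :: "'b itself \<Rightarrow> ('a, 'c) monoid_scheme \<Rightarrow> bool" where
  "two_closed_group (_ :: 'b itself) G \<longleftrightarrow>
     (\<forall>(\<Omega> :: 'b set) H. subgroup H (BijGroup \<Omega>) \<and> (BijGroup \<Omega>)\<lparr>carrier := H\<rparr> \<cong> G
        \<longrightarrow> two_closure \<Omega> H = H)"

end

theory Submission
  imports Defs
begin

lemma cyclic_ppow_min:
  assumes grp: "group K" and pr: "Factorial_Ring.prime p" and ord: "order K = p ^ Suc n"
    and cyc: "cyclic_group K" and fin: "finite (carrier K)"
  shows "\<exists>z\<in>carrier K. z \<noteq> \<one>\<^bsub>K\<^esub> \<and> (\<forall>h\<in>carrier K. h \<noteq> \<one>\<^bsub>K\<^esub> \<longrightarrow> (\<exists>k::nat. h [^]\<^bsub>K\<^esub> k = z))"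
proof -
  interpret K: group K by fact
  obtain a where a: "a \<in> carrier K" "subgroup_generated K {a} = K"
    using cyc unfolding cyclic_group_def by blast
  have orda: "K.ord a = p ^ Suc n"
    using K.cyclic_order_is_ord[OF a(1)] a(2) ord by simp
  have gen: "carrier K = range (\<lambda>i::int. a [^]\<^bsub>K\<^esub> i)"
    using a K.cyclic_group[of] 
    by (metis K.carrier_subgroup_generated_by_singleton a(2))
  define z where "z = a [^]\<^bsub>K\<^esub> (p ^ n)"
  have zc: "z \<in> carrier K" using a by (simp add: z_def)
  have pn: "p ^ n < p ^ Suc n" using prime_gt_1_nat[OF pr] by simp
  have z1: "z \<noteq> \<one>\<^bsub>K\<^esub>"
  proof
    assume "z = \<one>\<^bsub>K\<^esub>"
    then have "p ^ Suc n dvd p ^ n" using K.pow_eq_id[OF a(1)] orda z_def by simp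
    then show False using pn prime_gt_1_nat[OF pr] by (simp add: nat_dvd_not_less)
  qed
  have "\<exists>k::nat. h [^]\<^bsub>K\<^esub> k = z" if h: "h \<in> carrier K" "h \<noteq> \<one>\<^bsub>K\<^esub>" for h
  proof -
    obtain i :: int where hi: "h = a [^]\<^bsub>K\<^esub> i" using h gen by auto
    define k0 where "k0 = nat (i mod int (p ^ Suc n))"
    have pos: "0 < p ^ Suc n" using pr prime_gt_0_nat by simp
    have "a [^]\<^bsub>K\<^esub> i = a [^]\<^bsub>K\<^esub> (int k0)"
      unfolding K.int_pow_eq[OF a(1)] orda k0_def using pos
      by (simp add: mod_eq_dvd_iff[symmetric])
    then have hk: "h = a [^]\<^bsub>K\<^esub> k0" using hi by (simp add: int_pow_int)
    have k0l: "k0 < p ^ Suc n" using pos unfolding k0_def by (simp add: nat_less_iff)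
    have k0ne: "k0 \<noteq> 0"
    proof
      assume "k0 = 0" then show False using h hk by simp
    qed
    obtain x y where xy: "k0 * x = p ^ Suc n * y + gcd k0 (p ^ Suc n)"
      using bezout_nat[OF k0ne] by blast
    have "gcd k0 (p ^ Suc n) dvd p ^ Suc n" by simp
    then obtain j where j: "j \<le> Suc n" "gcd k0 (p ^ Suc n) = p ^ j"
      using divides_primepow_nat[OF pr] by blast
    have "j \<noteq> Suc n"
    proof
      assume "j = Suc n"
      then have "p ^ Suc n dvd k0" using j by (metis gcd_dvd1)
      then show False using k0l k0ne by (simp add: nat_dvd_not_less)
    qed
    then have "gcd k0 (p ^ Suc n) dvd p ^ n" using j by (simp add: le_imp_power_dvd)
    then obtain c where c: "p ^ n = gcd k0 (p ^ Suc n) * c" by blast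
    have "h [^]\<^bsub>K\<^esub> (x * c) = a [^]\<^bsub>K\<^esub> (k0 * x * c)"
      using hk a by (simp add: K.nat_pow_pow mult.assoc)
    also have "\<dots> = a [^]\<^bsub>K\<^esub> (p ^ Suc n * (y * c) + p ^ n)"
    proof -
      have "k0 * x * c = (p ^ Suc n * y + gcd k0 (p ^ Suc n)) * c" using xy by simp
      also have "\<dots> = p ^ Suc n * (y * c) + gcd k0 (p ^ Suc n) * c" by (simp add: distrib_right)
      finally have e: "k0 * x * c = p ^ Suc n * (y * c) + p ^ n" by (metis c)
      show ?thesis by (simp only: e)
    qed
    also have "\<dots> = z"
    proof -
      have "a [^]\<^bsub>K\<^esub> (p ^ Suc n * (y * c)) = \<one>\<^bsub>K\<^esub>"
        using K.pow_eq_id[OF a(1)] orda by simp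
      then show ?thesis using a by (simp add: K.nat_pow_mult[symmetric] z_def)
    qed
    finally show ?thesis by blast
  qed
  then show ?thesis using zc z1 by blast
qed

lemma BijGroup_mult_apply:
  "f \<in> Bij S \<Longrightarrow> g \<in> Bij S \<Longrightarrow> x \<in> S \<Longrightarrow> (f \<otimes>\<^bsub>BijGroup S\<^esub> g) x = f (g x)"
  by (simp add: BijGroup_def compose_def)

lemma Bij_ext_eq:
  "f \<in> Bij S \<Longrightarrow> g \<in> Bij S \<Longrightarrow> (\<And>x. x \<in> S \<Longrightarrow> f x = g x) \<Longrightarrow> f = g"
  by (meson Bij_imp_extensional extensionalityI)

lemma sub_pow_fix:
  assumes sub: "subgroup H (BijGroup S)" and h: "h \<in> H" and x: "x \<in> S" and hx: "h x = x"
  shows "(h [^]\<^bsub>BijGroup S\<lparr>carrier := H\<rparr>\<^esub> (k::nat)) x = x"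
proof (induction k)
  case 0
  then show ?case using x by (simp add: BijGroup_def)
next
  case (Suc k)
  interpret B: group "BijGroup S" by (rule group_BijGroup)
  have hB: "h \<in> Bij S" using sub h subgroup.subset by (fastforce simp: BijGroup_def)
  have pH: "h [^]\<^bsub>BijGroup S\<lparr>carrier := H\<rparr>\<^esub> k \<in> H"
    using subgroup.subgroup_is_group[OF sub group_BijGroup] h
    by (metis group.is_monoid monoid.nat_pow_closed partial_object.select_convs(1) partial_object.surjective partial_object.update_convs(1))
  have pB: "h [^]\<^bsub>BijGroup S\<lparr>carrier := H\<rparr>\<^esub> k \<in> Bij S" using pH sub subgroup.subset by (fastforce simp: BijGroup_def)
  have "(h [^]\<^bsub>BijGroup S\<lparr>carrier := H\<rparr>\<^esub> Suc k) = (h [^]\<^bsub>BijGroup S\<lparr>carrier := H\<rparr>\<^esub> k) \<otimes>\<^bsub>BijGroup S\<^esub> h"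
    by (simp add: nat_pow_def)
  then show ?case using Suc BijGroup_mult_apply[OF pB hB x] hx by simp
qed

lemma cyclic_imp_closed:
  assumes pr: "Factorial_Ring.prime p" and grp: "group G" and fin: "finite (carrier G)"
    and ord: "order G = p ^ n" and cyc: "cyclic_group G"
  shows "two_closed_group TYPE('b) G"
  unfolding two_closed_group_def
proof (intro allI impI)
  fix S :: "'b set" and H
  assume asm: "subgroup H (BijGroup S) \<and> BijGroup S\<lparr>carrier := H\<rparr> \<cong> G"
  then have sub: "subgroup H (BijGroup S)" and iso: "BijGroup S\<lparr>carrier := H\<rparr> \<cong> G" by auto
  define K where "K = BijGroup S\<lparr>carrier := H\<rparr>"
  have grK: "group K" unfolding K_def using subgroup.subgroup_is_group[OF sub group_BijGroup] .
  interpret K: group K by (rule grK)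
  have cK: "carrier K = H" by (simp add: K_def)
  have HB: "H \<subseteq> Bij S" using subgroup.subset[OF sub] by (simp add: BijGroup_def)
  have oneK: "\<one>\<^bsub>K\<^esub> = (\<lambda>x\<in>S. x)" by (simp add: K_def BijGroup_def)
  have multK: "\<And>f g x. f \<in> H \<Longrightarrow> g \<in> H \<Longrightarrow> x \<in> S \<Longrightarrow> (f \<otimes>\<^bsub>K\<^esub> g) x = f (g x)"
    using HB BijGroup_mult_apply by (fastforce simp: K_def)
  have oneH: "(\<lambda>x\<in>S. x) \<in> H" using K.one_closed oneK cK by simp
  have cycK: "cyclic_group K" using isomorphic_group_cyclicity[OF iso[folded K_def] grK grp] cyc by simp
  have finK: "finite (carrier K)" using iso_finite[OF iso[folded K_def]] fin by simp
  have ordK: "order K = p ^ n" using iso_same_card[OF iso[folded K_def]] ord by (simp add: order_def)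
  have reg: "S = {} \<or> (\<exists>a\<in>S. \<forall>h\<in>H. h a = a \<longrightarrow> h = (\<lambda>x\<in>S. x))"
  proof (cases n)
    case 0
    then have "card H = 1" using ordK cK by (simp add: order_def)
    then have "H = {\<lambda>x\<in>S. x}" using oneH by (metis card_1_singletonE singletonD)
    then show ?thesis by auto
  next
    case (Suc m)
    obtain z where z: "z \<in> H" "z \<noteq> (\<lambda>x\<in>S. x)"
      "\<forall>h\<in>H. h \<noteq> (\<lambda>x\<in>S. x) \<longrightarrow> (\<exists>k::nat. h [^]\<^bsub>K\<^esub> k = z)"
      using cyclic_ppow_min[OF grK pr _ cycK finK] ordK Suc cK oneK by auto
    obtain a where a: "a \<in> S" "z a \<noteq> a"
    proof -
      have "\<exists>a\<in>S. z a \<noteq> a"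
      proof (rule ccontr)
        assume "\<not> ?thesis"
        then have "z = (\<lambda>x\<in>S. x)" using Bij_ext_eq[of z S "\<lambda>x\<in>S. x"] HB z(1) id_Bij by auto
        then show False using z(2) by simp
      qed
      then show ?thesis using that by blast
    qed
    have "\<forall>h\<in>H. h a = a \<longrightarrow> h = (\<lambda>x\<in>S. x)"
    proof (intro ballI impI, rule ccontr)
      fix h assume h: "h \<in> H" "h a = a" "h \<noteq> (\<lambda>x\<in>S. x)"
      then obtain k :: nat where "h [^]\<^bsub>K\<^esub> k = z" using z(3) by blast
      then have "z a = a" using sub_pow_fix[OF sub h(1) a(1) h(2), of k] by (simp add: K_def)
      then show False using a(2) by simp
    qed
    then show ?thesis using a by blast
  qed
  show "two_closure S H = H"
  proof
    show "H \<subseteq> two_closure S H" using HB unfolding two_closure_def by blast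
  next
    show "two_closure S H \<subseteq> H"
    proof
      fix t assume t: "t \<in> two_closure S H"
      then have tB: "t \<in> Bij S" and tc: "\<forall>x\<in>S. \<forall>y\<in>S. \<exists>g\<in>H. t x = g x \<and> t y = g y"
        unfolding two_closure_def by auto
      show "t \<in> H"
      proof (cases "S = {}")
        case True
        then have "t = (\<lambda>x\<in>S. x)" using tB id_Bij Bij_ext_eq by blast
        then show ?thesis using oneH by simp
      next
        case False
        then obtain a where a: "a \<in> S" "\<forall>h\<in>H. h a = a \<longrightarrow> h = (\<lambda>x\<in>S. x)" using reg by blast
        obtain g where g: "g \<in> H" "t a = g a" using tc a(1) by blast
        have "t y = g y" if y: "y \<in> S" for y
        proof -
          obtain g' where g': "g' \<in> H" "t a = g' a" "t y = g' y" using tc a(1) y by blast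
          define u where "u = inv\<^bsub>K\<^esub> g \<otimes>\<^bsub>K\<^esub> g'"
          have ig: "inv\<^bsub>K\<^esub> g \<in> H" using g(1) cK K.inv_closed by blast
          have uH: "u \<in> H" unfolding u_def using ig g' cK K.m_closed by blast
          have "u a = (inv\<^bsub>K\<^esub> g) (g' a)" unfolding u_def using multK ig g' a by simp
          also have "\<dots> = (inv\<^bsub>K\<^esub> g) (g a)" using g g' by simp
          also have "\<dots> = (inv\<^bsub>K\<^esub> g \<otimes>\<^bsub>K\<^esub> g) a" using multK ig g a by simp
          also have "\<dots> = a" using g(1) cK oneK a by simp
          finally have "u = \<one>\<^bsub>K\<^esub>" using a(2) uH oneK by simp
          then have "g' = g" unfolding u_def using g(1) g'(1) cK
            by (metis K.inv_equality K.inv_inv K.l_inv K.m_closed K.inv_closed K.r_one K.l_one)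
          then show ?thesis using g' by simp
        qed
        then have "t = g" using Bij_ext_eq[OF tB] HB g(1) by blast
        then show ?thesis using g by simp
      qed
    qed
  qed
qed

lemma pgroup_center:
  assumes grp: "group Q" and fin: "finite (carrier Q)" and pr: "Factorial_Ring.prime p"
    and ord: "order Q = p ^ Suc k"
  shows "\<exists>q\<in>carrier Q. q \<noteq> \<one>\<^bsub>Q\<^esub> \<and> (\<forall>d\<in>carrier Q. d \<otimes>\<^bsub>Q\<^esub> q = q \<otimes>\<^bsub>Q\<^esub> d)"
proof (rule ccontr)
  assume nc: "\<not> ?thesis"
  interpret Q: group Q by fact
  define c where "c = (\<lambda>g. (\<lambda>h \<in> carrier Q. g \<otimes>\<^bsub>Q\<^esub> h \<otimes>\<^bsub>Q\<^esub> (inv\<^bsub>Q\<^esub> g)))"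
  interpret A: group_action Q "carrier Q" c unfolding c_def by (rule Q.action_by_conjugation)
  define Os where "Os = orbits Q (carrier Q) c"
  have o1: "orbit Q c \<one>\<^bsub>Q\<^esub> = {\<one>\<^bsub>Q\<^esub>}"
    unfolding orbit_def c_def
  proof (auto)
    show "\<exists>g. \<one>\<^bsub>Q\<^esub> = g \<otimes>\<^bsub>Q\<^esub> \<one>\<^bsub>Q\<^esub> \<otimes>\<^bsub>Q\<^esub> inv\<^bsub>Q\<^esub> g \<and> g \<in> carrier Q"
      by (rule exI[of _ "\<one>\<^bsub>Q\<^esub>"]) simp
  qed
  have finOs: "finite Os" unfolding Os_def orbits_def using fin by simp
  have oneOs: "{\<one>\<^bsub>Q\<^esub>} \<in> Os" unfolding Os_def orbits_def using o1 by force
  have dv: "p dvd card ob" if ob: "ob \<in> Os" "ob \<noteq> {\<one>\<^bsub>Q\<^esub>}" for ob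
  proof -
    obtain x where x: "x \<in> carrier Q" "ob = orbit Q c x" using ob unfolding Os_def orbits_def by blast
    have "card ob dvd p ^ Suc k" using A.orbit_stabilizer_theorem[OF x(1)] x(2) ord by (metis dvd_triv_left)
    then obtain i where i: "i \<le> Suc k" "card ob = p ^ i" using divides_primepow_nat[OF pr] by blast
    have "card ob \<noteq> 1"
    proof
      assume "card ob = 1"
      then obtain y where y: "ob = {y}" by (meson card_1_singletonE)
      have xo: "x \<in> ob" unfolding x(2) orbit_def c_def using x(1)
        by (smt (verit, best) Q.inv_one Q.l_one Q.one_closed Q.r_one mem_Collect_eq restrict_apply)
      then have yx: "y = x" using y by simp
      have "x \<noteq> \<one>\<^bsub>Q\<^esub>" using ob(2) y yx o1 x(2) by auto
      then obtain d where d: "d \<in> carrier Q" "d \<otimes>\<^bsub>Q\<^esub> x \<noteq> x \<otimes>\<^bsub>Q\<^esub> d" using nc x(1) by blast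
      have "c d x \<in> ob" unfolding x(2) orbit_def using d(1) by blast
      then have "d \<otimes>\<^bsub>Q\<^esub> x \<otimes>\<^bsub>Q\<^esub> inv\<^bsub>Q\<^esub> d = x" using y yx x(1) by (simp add: c_def)
      then have "d \<otimes>\<^bsub>Q\<^esub> x = x \<otimes>\<^bsub>Q\<^esub> d" using d(1) x(1)
        by (metis Q.inv_solve_right Q.m_closed)
      then show False using d by simp
    qed
    then have "i \<noteq> 0" using i by auto
    then show ?thesis using i by simp
  qed
  have "(\<Sum>ob\<in>Os. card ob) = (\<Sum>ob\<in>Os. \<Sum>x\<in>ob. (1::nat))" by simp
  also have "\<dots> = (\<Sum>x\<in>carrier Q. 1)" using A.disjoint_sum[OF fin] unfolding Os_def by blast
  also have "\<dots> = order Q" by (simp add: order_def)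
  finally have "order Q = (\<Sum>ob\<in>Os. card ob)" by simp
  also have "\<dots> = card {\<one>\<^bsub>Q\<^esub>} + (\<Sum>ob\<in>Os - {{\<one>\<^bsub>Q\<^esub>}}. card ob)"
    using sum.remove[OF finOs oneOs, of card] by simp
  finally have eq: "order Q = 1 + (\<Sum>ob\<in>Os - {{\<one>\<^bsub>Q\<^esub>}}. card ob)" by simp
  have "p dvd (\<Sum>ob\<in>Os - {{\<one>\<^bsub>Q\<^esub>}}. card ob)" by (rule dvd_sum) (use dv in auto)
  moreover have "p dvd order Q" using ord by simp
  ultimately have "p dvd 1" using eq by (metis dvd_add_left_iff)
  then show False using pr by simp
qed

definition cyc :: "('a, 'c) monoid_scheme \<Rightarrow> 'a \<Rightarrow> 'a set" where
  "cyc G y = {y [^]\<^bsub>G\<^esub> (k::nat) | k. True}"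

context group begin

lemma cyc_sub: assumes fin: "finite (carrier G)" and y: "y \<in> carrier G" shows "subgroup (cyc G y) G"
proof -
  have "generate G {y} = cyc G y" using generate_pow_on_finite_carrier[OF fin y] by (simp add: cyc_def)
  then show ?thesis using generate_is_subgroup[of "{y}"] y by simp
qed

lemma inv_cancel_left': "d \<in> carrier G \<Longrightarrow> z \<in> carrier G \<Longrightarrow> inv d \<otimes> (d \<otimes> z) = z"
  by (simp add: m_assoc[symmetric])

lemma cyc_mem: "y [^] (k::nat) \<in> cyc G y" unfolding cyc_def by blast

lemma cyc_self: "y \<in> carrier G \<Longrightarrow> y \<in> cyc G y" using cyc_mem[of y 1] by simp

lemma cyc_pow: "y \<in> carrier G \<Longrightarrow> z \<in> cyc G y \<Longrightarrow> z [^] (k::nat) \<in> cyc G y"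
  unfolding cyc_def by (auto simp: nat_pow_pow)

lemma cyc_carrier: "y \<in> carrier G \<Longrightarrow> cyc G y \<subseteq> carrier G" unfolding cyc_def by auto

lemma inv_cancel_left2: "d \<in> carrier G \<Longrightarrow> z \<in> carrier G \<Longrightarrow> d \<otimes> (inv d \<otimes> z) = z"
  by (simp add: m_assoc[symmetric])

lemma conj_pow: "d \<in> carrier G \<Longrightarrow> y \<in> carrier G \<Longrightarrow> d \<otimes> y [^] (k::nat) \<otimes> inv d = (d \<otimes> y \<otimes> inv d) [^] k"
proof (induction k)
  case 0 then show ?case by simp
next
  case (Suc k)
  have "d \<otimes> y [^] Suc k \<otimes> inv d = (d \<otimes> y [^] k \<otimes> inv d) \<otimes> (d \<otimes> y \<otimes> inv d)"
    using Suc.prems by (simp add: nat_pow_Suc2 m_assoc inv_cancel_left')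
  then show ?case using Suc by (simp add: nat_pow_Suc2)
qed

lemma coprime_pow_inv:
  assumes y: "y \<in> carrier G" and yN: "y [^] (N::nat) = \<one>" and cop: "coprime k N"
  shows "\<exists>k'::nat. (y [^] k) [^] k' = y"
proof (cases "k = 0")
  case True
  then have "N = 1" using cop by simp
  then have "y = \<one>" using yN y by simp
  then show ?thesis by simp
next
  case False
  obtain a b where ab: "k * a = N * b + gcd k N" using bezout_nat[OF False] by blast
  have "gcd k N = 1" using cop by simp
  then have "(y [^] k) [^] a = y [^] (N * b) \<otimes> y" using ab y by (simp add: nat_pow_pow nat_pow_mult[symmetric])
  also have "\<dots> = y" using y yN by (simp add: nat_pow_pow[symmetric])
  finally show ?thesis by blast
qed

lemma ord_prime:
  assumes y: "y \<in> carrier G" "y \<noteq> \<one>" "y [^] p = \<one>" and pr: "Factorial_Ring.prime (p::nat)"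
  shows "ord y = p"
proof -
  have "ord y dvd p" using y pow_eq_id by blast
  then have "ord y = 1 \<or> ord y = p" using pr by (simp add: prime_nat_iff)
  then show ?thesis using y ord_eq_1 by blast
qed

lemma pow_p_one_cop:
  assumes y: "y \<in> carrier G" "y [^] p = \<one>" and pr: "Factorial_Ring.prime (p::nat)"
    and ne: "y [^] (a::nat) \<noteq> \<one>"
  shows "coprime a p"
proof -
  have "\<not> p dvd a"
  proof
    assume "p dvd a" then obtain c where "a = p * c" by blast
    then have "y [^] a = \<one>" using y by (simp add: nat_pow_pow[symmetric])
    then show False using ne by simp
  qed
  then show ?thesis using pr by (metis prime_imp_coprime coprime_commute)
qed

lemma lcos_self: "subgroup K G \<Longrightarrow> h \<in> K \<Longrightarrow> h <# K = K"
  by (metis l_repr_independence lcos_mult_one one_closed subgroup.subset)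

lemma lcos_eq_self_mem: "subgroup K G \<Longrightarrow> c \<in> carrier G \<Longrightarrow> c <# K = K \<Longrightarrow> c \<in> K"
  by (metis l_coset_swap lcos_mult_one one_closed subgroup.one_closed subgroup.subset l_repr_independence)

lemma lcos_eq_mem: 
  assumes K: "subgroup K G" and c: "c \<in> carrier G" "e \<in> carrier G" and eq: "c <# K = e <# K"
  shows "inv e \<otimes> c \<in> K"
proof -
  have "inv e <# (c <# K) = inv e <# (e <# K)" using eq by simp
  then have "(inv e \<otimes> c) <# K = K" using K c by (simp add: lcos_m_assoc subgroup.subset lcos_mult_one)
  then show ?thesis using lcos_eq_self_mem K c by simp
qed

end

lemma fermat_nat: assumes pr: "Factorial_Ring.prime (p::nat)" shows "a ^ p mod p = a mod p"
proof (induction a)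
  case 0
  have "p > 0" using pr prime_gt_0_nat by blast
  then show ?case by (simp add: zero_power)
next
  case (Suc a)
  have p0: "p > 0" using pr prime_gt_0_nat by blast
  have "(a + 1) ^ p = (\<Sum>k\<le>p. (p choose k) * a ^ k)"
    using binomial[of a 1 p] by simp
  also have "\<dots> = (\<Sum>k\<in>insert 0 (insert p {1..<p}). (p choose k) * a ^ k)"
    by (rule sum.cong) (use p0 in auto)
  also have "\<dots> = 1 + (a ^ p + (\<Sum>k\<in>{1..<p}. (p choose k) * a ^ k))"
    using p0 by (simp add: sum.insert_if)
  finally have e: "(a + 1) ^ p = 1 + a ^ p + (\<Sum>k\<in>{1..<p}. (p choose k) * a ^ k)" by simp
  have "p dvd (\<Sum>k\<in>{1..<p}. (p choose k) * a ^ k)"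
    by (rule dvd_sum) (use pr p0 dvd_choose_prime in auto)
  then have "(a + 1) ^ p mod p = (1 + a ^ p) mod p" using e by (metis mod_add_right_eq dvd_imp_mod_0 add_0_right mod_mod_trivial)
  also have "\<dots> = (1 + a) mod p" using Suc by (metis mod_add_right_eq)
  finally show ?case by simp
qed

lemma geom_sum_mod:
  assumes pr: "Factorial_Ring.prime (p::nat)" and odd: "odd p" and r: "r mod p = 1"
  shows "\<exists>u. (\<Sum>i\<in>{1..p}. r ^ i) = p * u \<and> coprime u p"
proof -
  define t where "t = r div p"
  have rt: "r = 1 + p * t" using r unfolding t_def by (metis add.commute div_mult_mod_eq mult.commute)
  have pw: "\<exists>C. r ^ i = 1 + i * p * t + p\<^sup>2 * C" for i
  proof (induction i)
    case 0 then show ?case by simp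
  next
    case (Suc i)
    then obtain C where C: "r ^ i = 1 + i * p * t + p\<^sup>2 * C" by blast
    have "r ^ Suc i = (1 + i * p * t + p\<^sup>2 * C) * (1 + p * t)" using C rt by simp
    also have "\<dots> = 1 + Suc i * p * t + p\<^sup>2 * (i * t * t + C + C * p * t)"
      by (simp add: algebra_simps power2_eq_square)
    finally show ?case by blast
  qed
  have sm: "\<exists>C. (\<Sum>i\<in>{1..n}. r ^ i) = n + p * t * (\<Sum>i\<in>{1..n}. i) + p\<^sup>2 * C" for n
  proof (induction n)
    case 0 then show ?case by simp
  next
    case (Suc n)
    then obtain C where C: "(\<Sum>i\<in>{1..n}. r ^ i) = n + p * t * (\<Sum>i\<in>{1..n}. i) + p\<^sup>2 * C" by blast
    obtain D where D: "r ^ Suc n = 1 + Suc n * p * t + p\<^sup>2 * D" using pw by blast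
    have "(\<Sum>i\<in>{1..Suc n}. r ^ i) = (\<Sum>i\<in>{1..n}. r ^ i) + r ^ Suc n" by simp
    also have "\<dots> = Suc n + p * t * (\<Sum>i\<in>{1..Suc n}. i) + p\<^sup>2 * (C + D)"
      using C D by (simp add: algebra_simps)
    finally show ?case by blast
  qed
  obtain C where C: "(\<Sum>i\<in>{1..p}. r ^ i) = p + p * t * (\<Sum>i\<in>{1..p}. i) + p\<^sup>2 * C" using sm by blast
  obtain q where q: "p = 2 * q + 1" using odd by (metis oddE)
  have "2 * (\<Sum>i\<in>{1..p}. i) = p * (p + 1)" using double_gauss_sum_from_Suc_0[of p, where 'a = nat] by simp
  then have gs: "(\<Sum>i\<in>{1..p}. i) = p * (q + 1)" using q by simp
  define u where "u = 1 + p * (t * (q + 1) + C)"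
  have "(\<Sum>i\<in>{1..p}. r ^ i) = p * u" unfolding u_def using C gs by (simp add: algebra_simps power2_eq_square)
  moreover have "coprime u p"
  proof -
    have "u mod p = 1" unfolding u_def using prime_gt_1_nat[OF pr] by (simp add: mod_Suc)
    then show ?thesis by (metis coprime_mod_left_iff coprime_1_left mod_by_0 not_prime_0 pr)
  qed
  ultimately show ?thesis by blast
qed

context group begin

lemma conj_iter:
  assumes h: "h \<in> carrier G" and m: "m \<in> carrier G" and r: "h \<otimes> m \<otimes> inv h = m [^] (r::nat)"
  shows "h [^] (i::nat) \<otimes> m [^] (j::nat) \<otimes> inv (h [^] i) = m [^] (r ^ i * j)"
proof (induction i arbitrary: j)
  case 0 then show ?case using m by simp
next
  case (Suc i)
  have "h [^] Suc i \<otimes> m [^] j \<otimes> inv (h [^] Suc i) = h [^] i \<otimes> (h \<otimes> m [^] j \<otimes> inv h) \<otimes> inv (h [^] i)"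
    using h m by (simp add: m_assoc inv_mult_group)
  also have "h \<otimes> m [^] j \<otimes> inv h = m [^] (r * j)" using conj_pow[OF h m, of j] r m by (simp add: nat_pow_pow)
  also have "h [^] i \<otimes> m [^] (r * j) \<otimes> inv (h [^] i) = m [^] (r ^ i * (r * j))" using Suc by blast
  finally show ?case by (simp add: mult.assoc mult.commute mult.left_commute)
qed

lemma pow_prod:
  assumes h: "h \<in> carrier G" and m: "m \<in> carrier G" and r: "h \<otimes> m \<otimes> inv h = m [^] (r::nat)"
  shows "(h \<otimes> m [^] (j::nat)) [^] (n::nat) = m [^] (j * (\<Sum>i\<in>{1..n}. r ^ i)) \<otimes> h [^] n"
proof (induction n)
  case 0 then show ?case using m by simp
next
  case (Suc n)
  have A: "h [^] Suc n \<otimes> m [^] j = m [^] (r ^ Suc n * j) \<otimes> h [^] Suc n"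
  proof -
    have "m [^] (r ^ Suc n * j) \<otimes> h [^] Suc n = (h [^] Suc n \<otimes> m [^] j \<otimes> inv (h [^] Suc n)) \<otimes> h [^] Suc n"
      by (simp only: conj_iter[OF h m r])
    also have "\<dots> = h [^] Suc n \<otimes> m [^] j" using h m by (simp add: m_assoc)
    finally show ?thesis by simp
  qed
  have "(h \<otimes> m [^] j) [^] Suc n = m [^] (j * (\<Sum>i\<in>{1..n}. r ^ i)) \<otimes> h [^] n \<otimes> (h \<otimes> m [^] j)"
    using Suc by simp
  also have "\<dots> = m [^] (j * (\<Sum>i\<in>{1..n}. r ^ i)) \<otimes> (h [^] Suc n \<otimes> m [^] j)"
    using h m by (simp add: m_assoc)
  also have "\<dots> = m [^] (j * (\<Sum>i\<in>{1..n}. r ^ i)) \<otimes> m [^] (r ^ Suc n * j) \<otimes> h [^] Suc n"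
    using A h m by (simp add: m_assoc)
  also have "\<dots> = m [^] (j * (\<Sum>i\<in>{1..Suc n}. r ^ i)) \<otimes> h [^] Suc n"
    using m by (simp add: nat_pow_mult algebra_simps)
  finally show ?case .
qed

end

context group begin

lemma constr_facts:
  assumes fin: "finite (carrier G)" and pr: "Factorial_Ring.prime (p::nat)"
    and w: "w \<in> carrier G" "w \<noteq> \<one>" "w [^] p = \<one>"
    and wn: "\<forall>d\<in>carrier G. d \<otimes> w \<otimes> inv d \<in> cyc G w"
    and x: "x \<in> carrier G" "x [^] p = \<one>" "x \<notin> cyc G w" "x \<otimes> w = w \<otimes> x"
    and xn: "\<forall>d\<in>carrier G. \<exists>(a::nat) (b::nat). d \<otimes> x \<otimes> inv d = x [^] a \<otimes> w [^] b"
  shows "cyc G x \<inter> cyc G (x \<otimes> w) = {\<one>}"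
    and "\<And>c. c \<in> carrier G \<Longrightarrow> u \<in> cyc G w \<Longrightarrow> inv c \<otimes> u \<otimes> c \<in> cyc G w"
    and "\<And>e y. e \<in> carrier G \<Longrightarrow> y = x \<or> y = x \<otimes> w \<Longrightarrow> \<exists>(k::nat) (m::nat). e \<otimes> y [^] k \<otimes> inv e = x \<otimes> w [^] m"
proof -
  have xw: "x \<otimes> w \<in> carrier G" using x(1) w(1) by simp
  have subw: "subgroup (cyc G w) G" using cyc_sub[OF fin w(1)] .
  have subx: "subgroup (cyc G x) G" using cyc_sub[OF fin x(1)] .
  have ordw: "ord w = p" using ord_prime[OF w pr] .
  have xwcomm: "\<And>(a::nat) (b::nat). x [^] a \<otimes> w [^] b = w [^] b \<otimes> x [^] a"
  proof -
    fix a b :: nat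
    have xa: "x [^] a \<otimes> w = w \<otimes> x [^] a"
    proof (induction a)
      case 0 then show ?case using w by simp
    next
      case (Suc a)
      have "x [^] Suc a \<otimes> w = x [^] a \<otimes> (x \<otimes> w)" using x(1) w(1) by (simp add: m_assoc)
      also have "\<dots> = (x [^] a \<otimes> w) \<otimes> x" using x(1) w(1) x(4) by (simp add: m_assoc)
      also have "\<dots> = w \<otimes> x [^] Suc a" using Suc x(1) w(1) by (simp add: m_assoc)
      finally show ?case .
    qed
    show "x [^] a \<otimes> w [^] b = w [^] b \<otimes> x [^] a"
    proof (induction b)
      case 0 then show ?case using x by simp
    next
      case (Suc b)
      have "x [^] a \<otimes> w [^] Suc b = (x [^] a \<otimes> w [^] b) \<otimes> w" using x(1) w(1) by (simp add: m_assoc)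
      also have "\<dots> = w [^] b \<otimes> (x [^] a \<otimes> w)" using Suc x(1) w(1) by (simp add: m_assoc[symmetric])
      also have "\<dots> = w [^] Suc b \<otimes> x [^] a" using xa x(1) w(1) by (simp add: m_assoc)
      finally show ?case .
    qed
  qed
  have F1: "y = \<one>" if y: "y \<in> cyc G x" "y \<in> cyc G w" for y
  proof (rule ccontr)
    assume ne: "y \<noteq> \<one>"
    obtain a where a: "y = x [^] (a::nat)" using y(1) unfolding cyc_def by blast
    have "coprime a p" using pow_p_one_cop[OF x(1) x(2) pr] ne a by simp
    then obtain a' where "(x [^] a) [^] (a'::nat) = x" using coprime_pow_inv[OF x(1) x(2)] by blast
    then have "x \<in> cyc G w" using cyc_pow[OF w(1) y(2), of a'] a by simp
    then show False using x(3) by simp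
  qed
  show "cyc G x \<inter> cyc G (x \<otimes> w) = {\<one>}"
  proof
    show "{\<one>} \<subseteq> cyc G x \<inter> cyc G (x \<otimes> w)" using cyc_mem[of x 0] cyc_mem[of "x \<otimes> w" 0] by simp
    show "cyc G x \<inter> cyc G (x \<otimes> w) \<subseteq> {\<one>}"
    proof
      fix y assume y: "y \<in> cyc G x \<inter> cyc G (x \<otimes> w)"
      obtain a where a: "y = x [^] (a::nat)" using y unfolding cyc_def by blast
      obtain b where b: "y = (x \<otimes> w) [^] (b::nat)" using y unfolding cyc_def by blast
      have b2: "y = x [^] b \<otimes> w [^] b" using b pow_mult_distrib[OF x(4) x(1) w(1)] by simp
      have "w [^] b = inv (x [^] b) \<otimes> y" using b2 x(1) w(1) by (simp add: m_assoc[symmetric])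
      moreover have "inv (x [^] b) \<otimes> y \<in> cyc G x"
        using subx y cyc_mem[of x b] by (simp add: subgroup.m_closed subgroup.m_inv_closed)
      ultimately have "w [^] b = \<one>" using F1 cyc_mem[of w b] by simp
      then have "p dvd b" using pow_eq_id[OF w(1)] ordw by simp
      then have "x [^] b = \<one>" using x by (metis dvdE nat_pow_one nat_pow_pow)
      then show "y \<in> {\<one>}" using b2 \<open>w [^] b = \<one>\<close> x by simp
    qed
  qed
  show nrm: "inv c \<otimes> u \<otimes> c \<in> cyc G w" if c: "c \<in> carrier G" and u: "u \<in> cyc G w" for c u
  proof -
    obtain k where k: "u = w [^] (k::nat)" using u unfolding cyc_def by blast
    have "inv c \<otimes> u \<otimes> c = inv c \<otimes> w [^] k \<otimes> inv (inv c)" using c by (simp add: k)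
    also have "\<dots> = (inv c \<otimes> w \<otimes> inv (inv c)) [^] k" using conj_pow[of "inv c" w k] c w(1) by simp
    finally show ?thesis using wn[rule_format, of "inv c"] c cyc_pow[OF w(1)] by simp
  qed
  show "\<exists>(k::nat) (m::nat). e \<otimes> y [^] k \<otimes> inv e = x \<otimes> w [^] m" if e: "e \<in> carrier G" and y: "y = x \<or> y = x \<otimes> w" for e y
  proof -
    have yc: "y \<in> carrier G" using y x(1) w(1) by auto
    have "\<exists>(a::nat) (b::nat). e \<otimes> y \<otimes> inv e = x [^] a \<otimes> w [^] b"
    proof (cases "y = x")
      case True then show ?thesis using xn e by simp
    next
      case False
      then have yy: "y = x \<otimes> w" using y by simp
      obtain a b where ab: "e \<otimes> x \<otimes> inv e = x [^] (a::nat) \<otimes> w [^] (b::nat)" using xn e by blast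
      obtain c where c: "e \<otimes> w \<otimes> inv e = w [^] (c::nat)" using wn e unfolding cyc_def by blast
      have "e \<otimes> y \<otimes> inv e = (e \<otimes> x \<otimes> inv e) \<otimes> (e \<otimes> w \<otimes> inv e)"
        using e x(1) w(1) yy by (simp add: m_assoc inv_cancel_left')
      also have "\<dots> = x [^] a \<otimes> w [^] (b + c)" using ab c x(1) w(1) by (simp add: m_assoc nat_pow_mult[symmetric])
      finally show ?thesis by blast
    qed
    then obtain a b where ab: "e \<otimes> y \<otimes> inv e = x [^] (a::nat) \<otimes> w [^] (b::nat)" by blast
    have xa: "x [^] a \<noteq> \<one>"
    proof
      assume xa1: "x [^] a = \<one>"
      then have "e \<otimes> y \<otimes> inv e \<in> cyc G w" using ab w cyc_mem by simp
      then have "inv e \<otimes> (e \<otimes> y \<otimes> inv e) \<otimes> e \<in> cyc G w" using nrm e by blast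
      then have yw: "y \<in> cyc G w" using e yc by (simp add: m_assoc inv_cancel_left')
      show False
      proof (cases "y = x")
        case True then show ?thesis using yw x(3) by simp
      next
        case False
        then have "y = x \<otimes> w" using y by simp
        then have "x = y \<otimes> inv w" using x(1) w(1) by (simp add: m_assoc)
        moreover have "y \<otimes> inv w \<in> cyc G w"
          using yw subw cyc_self[OF w(1)] by (simp add: subgroup.m_closed subgroup.m_inv_closed)
        ultimately show ?thesis using x(3) by simp
      qed
    qed
    have "coprime a p" using pow_p_one_cop[OF x(1) x(2) pr xa] .
    then obtain a' where a': "(x [^] a) [^] (a'::nat) = x" using coprime_pow_inv[OF x(1) x(2)] by blast
    have "e \<otimes> y [^] a' \<otimes> inv e = (e \<otimes> y \<otimes> inv e) [^] a'" using conj_pow e yc by simp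
    also have "\<dots> = (x [^] a) [^] a' \<otimes> (w [^] b) [^] a'" using ab pow_mult_distrib x(1) w(1) xwcomm by simp
    also have "\<dots> = x \<otimes> w [^] (b * a')" using a' w by (simp add: nat_pow_pow)
    finally show ?thesis by blast
  qed
qed

end

context group begin

lemma construction:
  assumes fin: "finite (carrier G)" and pr: "Factorial_Ring.prime (p::nat)"
    and w: "w \<in> carrier G" "w \<noteq> \<one>" "w [^] p = \<one>"
    and wn: "\<forall>d\<in>carrier G. d \<otimes> w \<otimes> inv d \<in> cyc G w"
    and x: "x \<in> carrier G" "x [^] p = \<one>" "x \<notin> cyc G w" "x \<otimes> w = w \<otimes> x"
    and xn: "\<forall>d\<in>carrier G. \<exists>(a::nat) (b::nat). d \<otimes> x \<otimes> inv d = x [^] a \<otimes> w [^] b"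
  shows "\<exists>(Xs :: (nat \<times> 'a set) set) ph th. finite Xs \<and> ph \<in> hom G (BijGroup Xs) \<and>
     inj_on ph (carrier G) \<and> th \<in> two_closure Xs (ph ` carrier G) \<and> th \<notin> ph ` carrier G"
proof -
  note F = constr_facts[OF fin pr w wn x xn]
  have xw: "x \<otimes> w \<in> carrier G" using x(1) w(1) by simp
  define Kf where "Kf = (\<lambda>i::nat. if i = 0 then cyc G w else if i = 1 then cyc G x else cyc G (x \<otimes> w))"
  have subK: "subgroup (Kf i) G" for i unfolding Kf_def using cyc_sub[OF fin] w(1) x(1) xw by auto
  have Kc: "Kf i \<subseteq> carrier G" for i using subK subgroup.subset by blast
  define Xs where "Xs = (\<lambda>(i, c). (i, c <# Kf i)) ` ({..<3} \<times> carrier G)"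
  have finXs: "finite Xs" unfolding Xs_def using fin by simp
  have memXs: "q \<in> Xs \<longleftrightarrow> (\<exists>i<3. \<exists>c\<in>carrier G. q = (i, c <# Kf i))" for q
    unfolding Xs_def by auto
  define ph where "ph = (\<lambda>d. \<lambda>q\<in>Xs. (fst q, d <# snd q))"
  define th where "th = (\<lambda>q\<in>Xs. if fst q = 0 then (0::nat, x <# snd q) else q)"
  have phq: "ph d (i, c <# Kf i) = (i, (d \<otimes> c) <# Kf i)" if "d \<in> carrier G" "c \<in> carrier G" "i < 3" for d c i
    using that Kc lcos_m_assoc memXs unfolding ph_def by auto
  have phX: "ph d q \<in> Xs" if dq: "d \<in> carrier G" "q \<in> Xs" for d q
  proof -
    obtain i c where ic: "i < 3" "c \<in> carrier G" "q = (i, c <# Kf i)" using memXs[THEN iffD1, OF dq(2)] by blast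
    have "ph d q = (i, (d \<otimes> c) <# Kf i)" using phq ic dq by simp
    moreover have "d \<otimes> c \<in> carrier G" using ic dq by simp
    ultimately show ?thesis using ic(1) memXs[THEN iffD2] by blast
  qed
  have phinv: "ph (inv d) (ph d q) = q" if dq: "d \<in> carrier G" "q \<in> Xs" for d q
  proof -
    obtain i c where ic: "i < 3" "c \<in> carrier G" "q = (i, c <# Kf i)" using memXs[THEN iffD1, OF dq(2)] by blast
    show ?thesis using ic dq phq by (simp add: m_assoc[symmetric])
  qed
  have phB: "ph d \<in> Bij Xs" if d: "d \<in> carrier G" for d
  proof -
    have "bij_betw (ph d) Xs Xs"
    proof (rule bij_betwI[where g = "ph (inv d)"])
      show "ph d \<in> Xs \<rightarrow> Xs" using d phX by blast
      show "ph (inv d) \<in> Xs \<rightarrow> Xs" using d phX by blast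
      show "ph (inv d) (ph d q) = q" if "q \<in> Xs" for q using phinv d that by blast
      show "ph d (ph (inv d) q) = q" if "q \<in> Xs" for q using phinv[of "inv d" q] d that by simp
    qed
    then show ?thesis unfolding Bij_def ph_def by simp
  qed
  have phhom: "ph \<in> hom G (BijGroup Xs)"
  proof (rule homI)
    show "ph d \<in> carrier (BijGroup Xs)" if "d \<in> carrier G" for d using phB that by (simp add: BijGroup_def)
    show "ph (d \<otimes> e) = ph d \<otimes>\<^bsub>BijGroup Xs\<^esub> ph e" if de: "d \<in> carrier G" "e \<in> carrier G" for d e
    proof -
      have "ph d \<otimes>\<^bsub>BijGroup Xs\<^esub> ph e = compose Xs (ph d) (ph e)" using phB de by (simp add: BijGroup_def)
      also have "\<dots> = ph (d \<otimes> e)"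
      proof (rule ext)
        fix q show "compose Xs (ph d) (ph e) q = ph (d \<otimes> e) q"
        proof (cases "q \<in> Xs")
          case True
          then obtain i c where ic: "i < 3" "c \<in> carrier G" "q = (i, c <# Kf i)" using memXs[THEN iffD1] by blast
          then show ?thesis using de phq True by (simp add: compose_def m_assoc)
        next
          case False then show ?thesis by (simp add: compose_def ph_def)
        qed
      qed
      finally show ?thesis by simp
    qed
  qed
  have q1: "(1::nat, \<one> <# Kf 1) \<in> Xs" and q2: "(2::nat, \<one> <# Kf 2) \<in> Xs" and q0: "(0::nat, \<one> <# Kf 0) \<in> Xs"
    using memXs by auto
  have stab12: "h = \<one>" if h: "h \<in> carrier G" "h <# cyc G x = cyc G x" "h <# cyc G (x \<otimes> w) = cyc G (x \<otimes> w)" for h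
  proof -
    have "h \<in> cyc G x" using lcos_eq_self_mem[OF cyc_sub[OF fin x(1)] h(1) h(2)] .
    moreover have "h \<in> cyc G (x \<otimes> w)" using lcos_eq_self_mem[OF cyc_sub[OF fin xw] h(1) h(3)] .
    ultimately show ?thesis using F(1) by blast
  qed
  have A: "ph f (i, \<one> <# Kf i) = (i, f <# Kf i)" if "f \<in> carrier G" "i < 3" for f i
    using phq[of f \<one> i] that by simp
  have inj: "inj_on ph (carrier G)"
  proof (rule inj_onI)
    fix d e assume de: "d \<in> carrier G" "e \<in> carrier G" "ph d = ph e"
    have e1: "ph d (1, \<one> <# Kf 1) = ph e (1, \<one> <# Kf 1)" and e2: "ph d (2, \<one> <# Kf 2) = ph e (2, \<one> <# Kf 2)" using de by simp_all
    have "(1::nat, d <# Kf 1) = (1, e <# Kf 1)" using A[of d 1] A[of e 1] de e1 by simp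
    moreover have "(2::nat, d <# Kf 2) = (2, e <# Kf 2)" using A[of d 2] A[of e 2] de e2 by simp
    ultimately have "d <# cyc G x = e <# cyc G x" "d <# cyc G (x \<otimes> w) = e <# cyc G (x \<otimes> w)"
      by (simp_all add: Kf_def)
    then have "inv e \<otimes> d \<in> cyc G x" "inv e \<otimes> d \<in> cyc G (x \<otimes> w)"
      using lcos_eq_mem cyc_sub[OF fin] x(1) xw de by blast+
    then have "inv e \<otimes> d = \<one>" using F(1) by blast
    then show "d = e" using de by (metis inv_equality inv_inv inv_closed)
  qed
  have th_eq: "th q = (if fst q = 0 then ph x q else q)" if "q \<in> Xs" for q
    using that by (simp add: th_def ph_def)
  have fst_ph: "fst (ph d q) = fst q" if "q \<in> Xs" for d q using that by (simp add: ph_def)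
  define th' where "th' = (\<lambda>q\<in>Xs. if fst q = 0 then ph (inv x) q else q)"
  have th'_eq: "th' q = (if fst q = 0 then ph (inv x) q else q)" if "q \<in> Xs" for q
    using that by (simp add: th'_def)
  have thB: "th \<in> Bij Xs"
  proof -
    have "bij_betw th Xs Xs"
    proof (rule bij_betwI[where g = th'])
      show "th \<in> Xs \<rightarrow> Xs" using th_eq phX x(1) by auto
      show "th' \<in> Xs \<rightarrow> Xs" using th'_eq phX x(1) by auto
      show "th' (th q) = q" if q: "q \<in> Xs" for q
        using th_eq[OF q] th'_eq[OF q] th'_eq[OF phX[OF x(1) q]] fst_ph[OF q] phinv[OF x(1) q] by (auto split: if_splits)
      show "th (th' q) = q" if q: "q \<in> Xs" for q
        using th'_eq[OF q] th_eq[OF q] th_eq[OF phX[OF inv_closed[OF x(1)] q]] fst_ph[OF q] phinv[OF inv_closed[OF x(1)] q] x(1) by (auto split: if_splits)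
    qed
    then show ?thesis unfolding Bij_def th_def by simp
  qed
  have mixed: "\<exists>d\<in>carrier G. ph d q1 = th q1 \<and> ph d q2 = th q2"
    if q1: "q1 \<in> Xs" "fst q1 = 0" and q2: "q2 \<in> Xs" "fst q2 \<noteq> 0" for q1 q2
  proof -
    obtain c where c: "c \<in> carrier G" "q1 = (0, c <# Kf 0)"
      using memXs[THEN iffD1, OF q1(1)] q1(2) by force
    obtain j e where je: "j < 3" "j \<noteq> 0" "e \<in> carrier G" "q2 = (j, e <# Kf j)"
      using memXs[THEN iffD1, OF q2(1)] q2(2) by force
    define y where "y = (if j = 1 then x else x \<otimes> w)"
    have yK: "Kf j = cyc G y" unfolding y_def Kf_def using je by simp
    have yy: "y = x \<or> y = x \<otimes> w" unfolding y_def by simp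
    have yc: "y \<in> carrier G" using yy x(1) xw by auto
    obtain k m where km: "e \<otimes> y [^] (k::nat) \<otimes> inv e = x \<otimes> w [^] (m::nat)" using F(3)[OF je(3) yy] by blast
    define d where "d = x \<otimes> w [^] m"
    have dc: "d \<in> carrier G" unfolding d_def using x(1) w(1) by simp
    have "d \<otimes> e = e \<otimes> y [^] k"
      using km[symmetric] je(3) yc unfolding d_def by (simp add: m_assoc)
    then have "ph d q2 = (j, (e \<otimes> y [^] k) <# cyc G y)" using phq[OF dc je(3) je(1)] je(4) yK by simp
    also have "\<dots> = (j, e <# (y [^] k <# cyc G y))" using lcos_m_assoc cyc_carrier yc je(3) by simp
    also have "\<dots> = q2" using lcos_self[OF cyc_sub[OF fin yc] cyc_mem] je(4) yK by simp
    finally have d2: "ph d q2 = th q2" using th_eq[OF q2(1)] q2(2) by simp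
    define u where "u = inv c \<otimes> w [^] m \<otimes> c"
    have u: "u \<in> cyc G w" unfolding u_def using F(2)[OF c(1) cyc_mem] .
    have uc: "u \<in> carrier G" using u cyc_carrier w(1) by blast
    have "d \<otimes> c = (x \<otimes> c) \<otimes> u" unfolding d_def u_def using x(1) w(1) c(1)
      by (simp add: m_assoc inv_cancel_left2)
    then have "ph d q1 = (0, ((x \<otimes> c) \<otimes> u) <# cyc G w)" using phq[OF dc c(1), of 0] c(2) by (simp add: Kf_def)
    also have "\<dots> = (0, (x \<otimes> c) <# (u <# cyc G w))" using lcos_m_assoc cyc_carrier w(1) x(1) c(1) uc by simp
    also have "\<dots> = (0, (x \<otimes> c) <# cyc G w)" using lcos_self[OF cyc_sub[OF fin w(1)] u] by simp
    also have "\<dots> = th q1" using th_eq[OF q1(1)] q1(2) phq[OF x(1) c(1), of 0] c(2) by (simp add: Kf_def)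
    finally show ?thesis using d2 dc by blast
  qed
  have ph1: "ph \<one> q = q" if qX: "q \<in> Xs" for q
  proof -
    obtain i c where ic: "i < 3" "c \<in> carrier G" "q = (i, c <# Kf i)" using memXs[THEN iffD1, OF qX] by blast
    then show ?thesis using phq[OF one_closed ic(2) ic(1)] by simp
  qed
  have thc: "th \<in> two_closure Xs (ph ` carrier G)"
    unfolding two_closure_def
  proof (intro CollectI conjI ballI)
    show "th \<in> Bij Xs" by (rule thB)
    fix q1 q2 assume q1: "q1 \<in> Xs" and q2: "q2 \<in> Xs"
    have "\<exists>d\<in>carrier G. th q1 = ph d q1 \<and> th q2 = ph d q2"
    proof (cases "fst q1 = 0")
      case True
      show ?thesis
      proof (cases "fst q2 = 0")
        case True
        then show ?thesis using \<open>fst q1 = 0\<close> th_eq q1 q2 x(1) by auto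
      next
        case False
        then show ?thesis using mixed[OF q1 True q2 False] by metis
      qed
    next
      case False
      show ?thesis
      proof (cases "fst q2 = 0")
        case True
        then show ?thesis using mixed[OF q2 True q1 False] by metis
      next
        case False
        then show ?thesis using \<open>fst q1 \<noteq> 0\<close> th_eq q1 q2 ph1 one_closed by metis
      qed
    qed
    then show "\<exists>g\<in>ph ` carrier G. th q1 = g q1 \<and> th q2 = g q2" by blast
  qed
  have thn: "th \<notin> ph ` carrier G"
  proof
    assume "th \<in> ph ` carrier G"
    then obtain h where h: "h \<in> carrier G" "th = ph h" by blast
    have t1: "th (1, \<one> <# Kf 1) = (1, \<one> <# Kf 1)" using th_eq[OF q1] by simp
    have t2: "th (2, \<one> <# Kf 2) = (2, \<one> <# Kf 2)" using th_eq[OF q2] by simp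
    have "h <# cyc G x = cyc G x"
      using t1 h A[OF h(1), of 1] lcos_mult_one[OF Kc[of 1]] by (simp add: Kf_def)
    moreover have "h <# cyc G (x \<otimes> w) = cyc G (x \<otimes> w)"
      using t2 h A[OF h(1), of 2] lcos_mult_one[OF Kc[of 2]] by (simp add: Kf_def)
    ultimately have h1: "h = \<one>" using stab12 h(1) by blast
    have "th (0, \<one> <# Kf 0) = (0, x <# Kf 0)" using th_eq[OF q0] A[OF x(1), of 0] by simp
    moreover have "ph h (0, \<one> <# Kf 0) = (0, Kf 0)" using h1 A[OF one_closed, of 0] lcos_mult_one[OF Kc[of 0]] by simp
    ultimately have "x <# cyc G w = cyc G w" using h(2) by (simp add: Kf_def)
    then have "x \<in> cyc G w" using lcos_eq_self_mem[OF cyc_sub[OF fin w(1)] x(1)] by simp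
    then show False using x(3) by simp
  qed
  show ?thesis using finXs phhom inj thc thn by blast
qed

end

context group begin

lemma cyc_card: assumes fin: "finite (carrier G)" and y: "y \<in> carrier G" shows "card (cyc G y) = ord y"
proof -
  have "generate G {y} = cyc G y" using generate_pow_on_finite_carrier[OF fin y] by (simp add: cyc_def)
  then show ?thesis using generate_pow_card[OF y] by simp
qed

lemma rcos_pow_Q:
  assumes nM: "M \<lhd> G" and g: "g \<in> carrier G"
  shows "(M #> g) [^]\<^bsub>G Mod M\<^esub> (k::nat) = M #> (g [^] k)"
proof (induction k)
  case 0 then show ?case using nM by (simp add: normal_def subgroup.subset)
next
  case (Suc k)
  then show ?case using normal.rcos_sum[OF nM, of "g [^] k" g] g by simp
qed

lemma noncyclic_data:
  assumes fin: "finite (carrier G)" and pr: "Factorial_Ring.prime (p::nat)" and odd: "odd p"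
    and ordG: "order G = p ^ n" and nc: "\<not> cyclic_group G"
  shows "\<exists>w x. w \<in> carrier G \<and> w \<noteq> \<one> \<and> w [^] p = \<one> \<and> (\<forall>d\<in>carrier G. d \<otimes> w \<otimes> inv d \<in> cyc G w)
     \<and> x \<in> carrier G \<and> x [^] p = \<one> \<and> x \<notin> cyc G w \<and> x \<otimes> w = w \<otimes> x
     \<and> (\<forall>d\<in>carrier G. \<exists>(a::nat) (b::nat). d \<otimes> x \<otimes> inv d = x [^] a \<otimes> w [^] b)"
proof -
  have p1: "p > 1" using prime_gt_1_nat[OF pr] .
  define NC where "NC = {m \<in> carrier G. \<forall>d\<in>carrier G. d \<otimes> m \<otimes> inv d \<in> cyc G m}"
  have oneNC: "\<one> \<in> NC" unfolding NC_def using cyc_mem[of \<one> 0] by simp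
  have finNC: "finite NC" unfolding NC_def using fin by simp
  define N where "N = Max (ord ` NC)"
  have "N \<in> ord ` NC" unfolding N_def using finNC oneNC by (intro Max_in) auto
  then obtain m where m: "m \<in> NC" "ord m = N" by blast
  have maxm: "ord m' \<le> ord m" if "m' \<in> NC" for m'
    unfolding m(2) N_def by (rule Max_ge) (use finNC that in auto)
  have mc: "m \<in> carrier G" using m(1) unfolding NC_def by simp
  have mn: "\<forall>d\<in>carrier G. d \<otimes> m \<otimes> inv d \<in> cyc G m" using m(1) unfolding NC_def by simp
  define M where "M = cyc G m"
  have subM: "subgroup M G" unfolding M_def using cyc_sub[OF fin mc] .
  have Mc: "M \<subseteq> carrier G" using subM subgroup.subset by blast
  have nrmM: "d \<otimes> \<mu> \<otimes> inv d \<in> M" if dm: "d \<in> carrier G" "\<mu> \<in> M" for d \<mu>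
  proof -
    obtain k where k: "\<mu> = m [^] (k::nat)" using dm(2) unfolding M_def cyc_def by blast
    have "d \<otimes> \<mu> \<otimes> inv d = (d \<otimes> m \<otimes> inv d) [^] k" using conj_pow[OF dm(1) mc] k by simp
    then show ?thesis using mn dm(1) cyc_pow[OF mc] unfolding M_def by simp
  qed
  have nM: "M \<lhd> G" using normal_inv_iff subM nrmM by blast
  have cardM: "card M = ord m" unfolding M_def using cyc_card[OF fin mc] .
  have Mne: "M \<noteq> carrier G"
  proof
    assume eq: "M = carrier G"
    have "carrier G = range (\<lambda>k::int. m [^] k)"
    proof
      show "carrier G \<subseteq> range (\<lambda>k::int. m [^] k)"
      proof
        fix y assume "y \<in> carrier G"
        then obtain k where "y = m [^] (k::nat)" using eq unfolding M_def cyc_def by blast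
        then have "y = m [^] (int k)" by (simp add: int_pow_int)
        then show "y \<in> range (\<lambda>k::int. m [^] k)" by blast
      qed
      show "range (\<lambda>k::int. m [^] k) \<subseteq> carrier G" using mc by auto
    qed
    then have "cyclic_group G" using cyclic_group mc by blast
    then show False using nc by simp
  qed
  define Q where "Q = G Mod M"
  have grQ: "group Q" unfolding Q_def using normal.factorgroup_is_group[OF nM] .
  have cQ: "carrier Q = rcosets M" unfolding Q_def by (simp add: FactGroup_def)
  have finQ: "finite (carrier Q)" using cQ fin unfolding RCOSETS_def by simp
  have lag: "card (rcosets M) * card M = p ^ n" using lagrange[OF subM] ordG by simp
  then have "card (rcosets M) dvd p ^ n" by (metis dvd_triv_left)
  then obtain i where i: "i \<le> n" "card (rcosets M) = p ^ i" using divides_primepow_nat[OF pr] by blast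
  have "card M < card (carrier G)" using Mne Mc fin by (simp add: psubset_card_mono psubsetI)
  then have "i \<noteq> 0" using lag i ordG by (metis mult_1 order_def power_0 less_irrefl)
  then obtain k where k: "order Q = p ^ Suc k" using i cQ by (metis not0_implies_Suc order_def)
  obtain q0 where q0: "q0 \<in> carrier Q" "q0 \<noteq> \<one>\<^bsub>Q\<^esub>" "\<forall>d\<in>carrier Q. d \<otimes>\<^bsub>Q\<^esub> q0 = q0 \<otimes>\<^bsub>Q\<^esub> d"
    using pgroup_center[OF grQ finQ pr k] by blast
  interpret Q: group Q by (rule grQ)
  have "Q.ord q0 dvd p ^ Suc k" using Q.ord_dvd_group_order[OF q0(1)] k by simp
  then obtain t where t: "t \<le> Suc k" "Q.ord q0 = p ^ t" using divides_primepow_nat[OF pr] by blast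
  have "t \<noteq> 0" using t q0 Q.ord_eq_1 by auto
  then obtain t' where t': "t = Suc t'" using not0_implies_Suc by blast
  define q where "q = q0 [^]\<^bsub>Q\<^esub> (p ^ t')"
  have qc: "q \<in> carrier Q" unfolding q_def using q0(1) by simp
  have ordq: "Q.ord q = p"
    unfolding q_def using Q.ord_pow[OF q0(1), of "p ^ t'"] t t' p1 by simp
  have q1: "q \<noteq> \<one>\<^bsub>Q\<^esub>" using ordq Q.ord_eq_1[OF qc] p1 by auto
  have qp: "q [^]\<^bsub>Q\<^esub> p = \<one>\<^bsub>Q\<^esub>" using Q.pow_ord_eq_1[OF qc] ordq by simp
  have qcent: "d \<otimes>\<^bsub>Q\<^esub> q = q \<otimes>\<^bsub>Q\<^esub> d" if d: "d \<in> carrier Q" for d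
  proof -
    have "d \<otimes>\<^bsub>Q\<^esub> q0 [^]\<^bsub>Q\<^esub> (j::nat) = q0 [^]\<^bsub>Q\<^esub> j \<otimes>\<^bsub>Q\<^esub> d" for j
    proof (induction j)
      case 0 then show ?case using d by simp
    next
      case (Suc j)
      have "d \<otimes>\<^bsub>Q\<^esub> q0 [^]\<^bsub>Q\<^esub> Suc j = (d \<otimes>\<^bsub>Q\<^esub> q0 [^]\<^bsub>Q\<^esub> j) \<otimes>\<^bsub>Q\<^esub> q0"
        using d q0(1) by (simp add: Q.m_assoc)
      also have "\<dots> = q0 [^]\<^bsub>Q\<^esub> j \<otimes>\<^bsub>Q\<^esub> (d \<otimes>\<^bsub>Q\<^esub> q0)" using Suc d q0(1) by (simp add: Q.m_assoc)
      also have "\<dots> = q0 [^]\<^bsub>Q\<^esub> j \<otimes>\<^bsub>Q\<^esub> (q0 \<otimes>\<^bsub>Q\<^esub> d)" using q0(3) d by simp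
      also have "\<dots> = (q0 [^]\<^bsub>Q\<^esub> j \<otimes>\<^bsub>Q\<^esub> q0) \<otimes>\<^bsub>Q\<^esub> d" using q0(1) d by (simp only: Q.m_assoc Q.nat_pow_closed)
      also have "\<dots> = q0 [^]\<^bsub>Q\<^esub> Suc j \<otimes>\<^bsub>Q\<^esub> d" by (simp only: Q.nat_pow_Suc)
      finally show ?case .
    qed
    then show ?thesis unfolding q_def by blast
  qed
  obtain g where g: "g \<in> carrier G" "q = M #> g" using qc cQ unfolding RCOSETS_def by blast
  have gM: "g \<notin> M"
  proof
    assume "g \<in> M"
    then have "M #> g = M" using subgroup.rcos_const[OF subM is_group] by blast
    then show False using q1 g(2) unfolding Q_def by simp
  qed
  have gpM: "g [^] p \<in> M"
  proof -
    have "M #> (g [^] p) = M" using qp rcos_pow_Q[OF nM g(1), of p] g(2) unfolding Q_def by simp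
    moreover have "g [^] p \<in> M #> g [^] p" using rcos_self[of "g [^] p" M] subM g(1) by simp
    ultimately show ?thesis by simp
  qed
  have gcent: "\<exists>\<mu>\<in>M. d \<otimes> g \<otimes> inv d = \<mu> \<otimes> g" if d: "d \<in> carrier G" for d
  proof -
    have dQ: "M #> d \<in> carrier Q" using cQ d Mc by (simp add: rcosetsI)
    have "(M #> d) <#> (M #> g) = (M #> g) <#> (M #> d)" using qcent[OF dQ] g(2) unfolding Q_def by simp
    then have "M #> (d \<otimes> g) = M #> (g \<otimes> d)" using normal.rcos_sum[OF nM] d g(1) by simp
    then have "d \<otimes> g \<in> M #> (g \<otimes> d)" using rcos_self[of "d \<otimes> g" M] subM d g(1) by simp
    then obtain \<mu> where mu: "\<mu> \<in> M" "d \<otimes> g = \<mu> \<otimes> (g \<otimes> d)" unfolding r_coset_def by blast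
    have muc: "\<mu> \<in> carrier G" using mu(1) Mc by blast
    have "d \<otimes> g \<otimes> inv d = \<mu> \<otimes> g" using mu(2) muc d g(1) by (simp add: m_assoc)
    then show ?thesis using mu(1) by blast
  qed
  have mg: "m \<notin> cyc G g"
  proof
    assume mg: "m \<in> cyc G g"
    have Mg: "M \<subseteq> cyc G g"
    proof
      fix y assume "y \<in> M"
      then obtain k where "y = m [^] (k::nat)" unfolding M_def cyc_def by blast
      then show "y \<in> cyc G g" using cyc_pow[OF g(1) mg] by simp
    qed
    have subg: "subgroup (cyc G g) G" using cyc_sub[OF fin g(1)] .
    have "g \<in> NC"
    proof -
      have "d \<otimes> g \<otimes> inv d \<in> cyc G g" if d: "d \<in> carrier G" for d
      proof -
        obtain \<mu> where mu: "\<mu> \<in> M" "d \<otimes> g \<otimes> inv d = \<mu> \<otimes> g" using gcent[OF d] by blast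
        then show ?thesis using Mg subg cyc_self[OF g(1)] by (simp add: subgroup.m_closed subsetD)
      qed
      then show ?thesis unfolding NC_def using g(1) by simp
    qed
    then have "ord g \<le> ord m" using maxm by simp
    moreover have "card M < card (cyc G g)"
    proof (rule psubset_card_mono)
      show "finite (cyc G g)" using cyc_carrier[OF g(1)] fin finite_subset by blast
      show "M \<subset> cyc G g" using Mg gM cyc_self[OF g(1)] by blast
    qed
    ultimately show False using cardM cyc_card[OF fin g(1)] by simp
  qed
  have "ord m dvd p ^ n" using ord_dvd_group_order[OF mc] ordG by simp
  then obtain e where e: "e \<le> n" "ord m = p ^ e" using divides_primepow_nat[OF pr] by blast
  have "e \<noteq> 0"
  proof
    assume "e = 0"
    then have "m = \<one>" using e ord_eq_1[OF mc] by simp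
    then show False using mg cyc_mem[of g 0] by simp
  qed
  then obtain e' where e': "e = Suc e'" using not0_implies_Suc by blast
  have mpe: "m [^] (p ^ e) = \<one>" using pow_ord_eq_1[OF mc] e by simp
  obtain s where s: "g [^] p = m [^] (s::nat)" using gpM unfolding M_def cyc_def by blast
  have "p dvd s"
  proof (rule ccontr)
    assume "\<not> p dvd s"
    then have "coprime s p" using pr by (metis prime_imp_coprime coprime_commute)
    then have "coprime s (p ^ e)" by simp
    then obtain s' where s': "(m [^] s) [^] (s'::nat) = m" using coprime_pow_inv[OF mc mpe] by blast
    have "g [^] (p * s') = (g [^] p) [^] s'" using g(1) by (simp add: nat_pow_pow)
    then have "m = g [^] (p * s')" using s s' by simp
    then show False using mg cyc_mem[of g "p * s'"] by simp
  qed
  then obtain s1 where s1: "s = p * s1" by blast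
  obtain r where r: "g \<otimes> m \<otimes> inv g = m [^] (r::nat)" using mn g(1) unfolding cyc_def by blast
  have rmod: "r mod p = 1"
  proof -
    have c1: "m [^] s \<otimes> m = m \<otimes> m [^] s" using mc by (metis nat_pow_Suc nat_pow_Suc2)
    have "g [^] p \<otimes> m \<otimes> inv (g [^] p) = m \<otimes> m [^] s \<otimes> inv (m [^] s)" using s c1 by simp
    also have "\<dots> = m" using mc by (simp add: m_assoc)
    finally have gpc: "g [^] p \<otimes> m \<otimes> inv (g [^] p) = m" .
    have "g [^] p \<otimes> m [^] (1::nat) \<otimes> inv (g [^] p) = m [^] (r ^ p * 1)" using conj_iter[OF g(1) mc r] .
    then have "m [^] (r ^ p) = m" using gpc mc by simp
    then have "m [^] int (r ^ p) = m [^] int 1" using mc by (metis int_pow_int nat_pow_eone)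
    then have "int (p ^ e) dvd int 1 - int (r ^ p)" using int_pow_eq[OF mc] e by simp
    then have "int p dvd int 1 - int (r ^ p)" using e' by (metis dvd_mult_left of_nat_dvd_iff power_Suc of_nat_mult dvd_trans dvd_refl)
    then have "int p dvd int (r ^ p) - int 1" by (simp add: dvd_diff_commute)
    then have "r ^ p mod p = 1 mod p" by (metis mod_eq_dvd_iff of_nat_mod of_nat_eq_iff zmod_int)
    then show ?thesis using fermat_nat[OF pr, of r] p1 by simp
  qed
  obtain u where u: "(\<Sum>i\<in>{1..p}. r ^ i) = p * u" "coprime u p" using geom_sum_mod[OF pr odd rmod] by blast
  define w where "w = m [^] (p ^ e')"
  have ucop: "coprime u (p ^ e')" using u(2) by (simp add: coprime_commute)
  have pe: "p ^ e = p * p ^ e'" using e' by simp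
  define y where "y = m [^] p"
  have yc: "y \<in> carrier G" unfolding y_def using mc by simp
  have ype: "y [^] (p ^ e') = \<one>" unfolding y_def using mc mpe pe by (simp add: nat_pow_pow)
  obtain u' where u': "(y [^] u) [^] (u'::nat) = y" using coprime_pow_inv[OF yc ype ucop] by blast
  define k where "k = (p ^ e' - 1) * s1"
  define j where "j = u' * k"
  define x where "x = g \<otimes> m [^] j"
  have xc: "x \<in> carrier G" unfolding x_def using g(1) mc by simp
  have xp: "x [^] p = \<one>"
  proof -
    have "x [^] p = m [^] (j * (p * u)) \<otimes> g [^] p" unfolding x_def using pow_prod[OF g(1) mc r, of j p] u(1) by simp
    also have "m [^] (j * (p * u)) = ((y [^] u) [^] u') [^] k"
      unfolding y_def j_def using mc by (simp add: nat_pow_pow mult.commute mult.left_commute)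
    also have "\<dots> = m [^] (p * k)" using u' unfolding y_def using mc by (simp add: nat_pow_pow)
    also have "g [^] p = m [^] (p * s1)" using s s1 by simp
    also have "m [^] (p * k) \<otimes> m [^] (p * s1) = m [^] (p * (k + s1))" using mc by (simp add: nat_pow_mult add_mult_distrib2)
    also have "k + s1 = p ^ e' * s1" unfolding k_def using p1 by (simp add: algebra_simps diff_mult_distrib)
    also have "m [^] (p * (p ^ e' * s1)) = (m [^] (p ^ e)) [^] s1" using pe mc by (simp add: nat_pow_pow mult.assoc)
    finally show ?thesis using mpe by simp
  qed
  define w where "w = m [^] (p ^ e')"
  have wc: "w \<in> carrier G" unfolding w_def using mc by simp
  have w1: "w \<noteq> \<one>"
  proof
    assume "w = \<one>"
    then have "p ^ e dvd p ^ e'" using pow_eq_id[OF mc] e unfolding w_def by simp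
    moreover have "p ^ e' < p ^ e" using e' p1 by simp
    moreover have "p ^ e' > 0" using p1 by simp
    ultimately show False by (simp add: nat_dvd_not_less)
  qed
  have wp: "w [^] p = \<one>" unfolding w_def using mc mpe pe by (simp add: nat_pow_pow mult.commute)
  have wn: "\<forall>d\<in>carrier G. d \<otimes> w \<otimes> inv d \<in> cyc G w"
  proof
    fix d assume d: "d \<in> carrier G"
    obtain a where a: "d \<otimes> m \<otimes> inv d = m [^] (a::nat)" using mn d unfolding cyc_def by blast
    have "d \<otimes> w \<otimes> inv d = (d \<otimes> m \<otimes> inv d) [^] (p ^ e')" unfolding w_def using conj_pow[OF d mc] by simp
    also have "\<dots> = w [^] a" unfolding w_def using a mc by (simp add: nat_pow_pow mult.commute)
    finally show "d \<otimes> w \<otimes> inv d \<in> cyc G w" using cyc_mem by simp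
  qed
  have wM: "cyc G w \<subseteq> M"
  proof
    fix z assume "z \<in> cyc G w"
    then obtain a where "z = w [^] (a::nat)" unfolding cyc_def by blast
    then show "z \<in> M" unfolding M_def w_def using cyc_pow[OF mc cyc_mem] by simp
  qed
  have mjM: "m [^] j \<in> M" unfolding M_def by (rule cyc_mem)
  have mjc: "m [^] j \<in> carrier G" using mc by simp
  have xnw: "x \<notin> cyc G w"
  proof
    assume "x \<in> cyc G w"
    then have xM: "x \<in> M" using wM by blast
    have "x \<otimes> inv (m [^] j) = g" unfolding x_def using g(1) mjc by (simp add: m_assoc)
    moreover have "x \<otimes> inv (m [^] j) \<in> M" using xM mjM subM by (simp add: subgroup.m_closed subgroup.m_inv_closed)
    ultimately show False using gM by simp
  qed
  have xm: "x \<otimes> m \<otimes> inv x = m [^] r"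
  proof -
    have c1: "m [^] j \<otimes> m = m \<otimes> m [^] j" using mc by (metis nat_pow_Suc nat_pow_Suc2)
    have "x \<otimes> m \<otimes> inv x = g \<otimes> (m [^] j \<otimes> m) \<otimes> inv (m [^] j) \<otimes> inv g"
      unfolding x_def using g(1) mc by (simp add: m_assoc inv_mult_group)
    also have "\<dots> = g \<otimes> m \<otimes> inv g" unfolding c1 using g(1) mc by (simp add: m_assoc)
    finally show ?thesis using r by simp
  qed
  have wr: "w [^] r = w"
  proof -
    have "r = 1 + p * (r div p)" using rmod by (metis add.commute div_mult_mod_eq mult.commute)
    then have "w [^] r = w \<otimes> (w [^] p) [^] (r div p)" using wc by (metis nat_pow_mult nat_pow_pow nat_pow_eone)
    then show ?thesis using wp wc by simp
  qed
  have xw: "x \<otimes> w = w \<otimes> x"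
  proof -
    have "x \<otimes> w \<otimes> inv x = (x \<otimes> m \<otimes> inv x) [^] (p ^ e')" unfolding w_def using conj_pow[OF xc mc] by simp
    also have "\<dots> = w [^] r" unfolding xm w_def using mc by (simp add: nat_pow_pow mult.commute)
    finally have "x \<otimes> w \<otimes> inv x = w" using wr by simp
    then show ?thesis using xc wc by (metis inv_solve_right m_closed)
  qed
  have xn: "\<forall>d\<in>carrier G. \<exists>(a::nat) (b::nat). d \<otimes> x \<otimes> inv d = x [^] a \<otimes> w [^] b"
  proof
    fix d assume d: "d \<in> carrier G"
    obtain \<mu> where mu: "\<mu> \<in> M" "d \<otimes> g \<otimes> inv d = \<mu> \<otimes> g" using gcent[OF d] by blast
    have muc: "\<mu> \<in> carrier G" using mu(1) Mc by blast
    define m' where "m' = d \<otimes> m [^] j \<otimes> inv d"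
    have m'M: "m' \<in> M" unfolding m'_def using nrmM[OF d mjM] .
    have m'c: "m' \<in> carrier G" using m'M Mc by blast
    define \<nu> where "\<nu> = inv g \<otimes> \<mu> \<otimes> g"
    have nuM: "\<nu> \<in> M" unfolding \<nu>_def using nrmM[OF inv_closed[OF g(1)] mu(1)] g(1) by simp
    have nuc: "\<nu> \<in> carrier G" using nuM Mc by blast
    have "d \<otimes> x \<otimes> inv d = (d \<otimes> g \<otimes> inv d) \<otimes> m'"
      unfolding x_def m'_def using d g(1) mjc by (simp add: m_assoc inv_cancel_left')
    also have "\<dots> = g \<otimes> \<nu> \<otimes> m'" unfolding mu(2) \<nu>_def using g(1) muc by (simp add: m_assoc inv_cancel_left2)
    finally have dx: "d \<otimes> x \<otimes> inv d = g \<otimes> \<nu> \<otimes> m'" .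
    define z where "z = inv (m [^] j) \<otimes> (\<nu> \<otimes> m')"
    have zM: "z \<in> M" unfolding z_def using mjM nuM m'M subM by (simp add: subgroup.m_closed subgroup.m_inv_closed)
    then obtain c where c: "z = m [^] (c::nat)" unfolding M_def cyc_def by blast
    have "x \<otimes> m [^] c = (g \<otimes> m [^] j) \<otimes> (inv (m [^] j) \<otimes> (\<nu> \<otimes> m'))"
      using c z_def x_def by simp
    also have "\<dots> = g \<otimes> \<nu> \<otimes> m'" using g(1) mjc nuc m'c by (simp add: m_assoc inv_cancel_left2)
    finally have dx2: "d \<otimes> x \<otimes> inv d = x \<otimes> m [^] c" using dx by simp
    have "(d \<otimes> x \<otimes> inv d) [^] p = \<one>" using conj_pow[OF d xc, of p, symmetric] xp d by simp
    then have "m [^] (c * (p * u)) = \<one>" using dx2 pow_prod[OF xc mc xm, of c p] u(1) xp mc by simp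
    then have "p ^ e dvd c * (p * u)" using pow_eq_id[OF mc] e by simp
    then have "p * p ^ e' dvd p * (c * u)" using pe by (simp add: mult.commute mult.left_commute)
    then have "p ^ e' dvd c * u" using p1 by simp
    then have "p ^ e' dvd c" using ucop by (simp add: coprime_commute coprime_dvd_mult_left_iff)
    then obtain b where b: "c = p ^ e' * b" by blast
    have "d \<otimes> x \<otimes> inv d = x [^] (1::nat) \<otimes> w [^] b" using dx2 b xc mc unfolding w_def by (simp add: nat_pow_pow)
    then show "\<exists>(a::nat) (b::nat). d \<otimes> x \<otimes> inv d = x [^] a \<otimes> w [^] b" by blast
  qed
  show ?thesis using wc w1 wp wn xc xp xnw xw xn by blast
qed

end

lemma not_closed_from_action:
  fixes G :: "('a, 'c) monoid_scheme" and Xs :: "'x set" and \<phi> :: "'a \<Rightarrow> 'x \<Rightarrow> 'x"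
  assumes grp: "group G" and inf: "infinite (UNIV :: 'b set)" and finX: "finite Xs"
    and hom: "\<phi> \<in> hom G (BijGroup Xs)" and inj: "inj_on \<phi> (carrier G)"
    and th1: "\<theta> \<in> two_closure Xs (\<phi> ` carrier G)" and th2: "\<theta> \<notin> \<phi> ` carrier G"
  shows "\<not> two_closed_group TYPE('b) G"
proof -
  interpret G: group G by fact
  obtain B :: "'b set" where B: "finite B" "card B = card Xs"
    using infinite_arbitrarily_large[OF inf] by blast
  obtain \<iota> where io: "bij_betw \<iota> Xs B" using finite_same_card_bij[OF finX B(1)] B(2) by metis
  define j where "j = inv_into Xs \<iota>"
  have jB: "bij_betw j B Xs" unfolding j_def using io by (rule bij_betw_inv_into)
  have ji: "\<And>x. x \<in> Xs \<Longrightarrow> j (\<iota> x) = x" unfolding j_def using io bij_betw_inv_into_left by metis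
  have ij: "\<And>b. b \<in> B \<Longrightarrow> \<iota> (j b) = b" unfolding j_def using io bij_betw_inv_into_right by metis
  have iX: "\<And>x. x \<in> Xs \<Longrightarrow> \<iota> x \<in> B" using io bij_betwE by blast
  have jX: "\<And>b. b \<in> B \<Longrightarrow> j b \<in> Xs" using jB bij_betwE by blast
  define T where "T = (\<lambda>f. \<lambda>b\<in>B. \<iota> (f (j b)))"
  have TB: "T f \<in> Bij B" if f: "f \<in> Bij Xs" for f
  proof -
    have bf: "bij_betw f Xs Xs" using f by (simp add: Bij_def)
    have "bij_betw (\<iota> \<circ> (f \<circ> j)) B B"
      by (rule bij_betw_trans[OF bij_betw_trans[OF jB bf] io])
    then have "bij_betw (T f) B B" unfolding T_def
      by (rule bij_betw_cong[THEN iffD1, rotated]) simp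
    then show ?thesis unfolding Bij_def T_def by auto
  qed
  have Tmult: "T (f \<otimes>\<^bsub>BijGroup Xs\<^esub> g) = T f \<otimes>\<^bsub>BijGroup B\<^esub> T g" if f: "f \<in> Bij Xs" and g: "g \<in> Bij Xs" for f g
  proof -
    have gX: "\<And>x. x \<in> Xs \<Longrightarrow> g x \<in> Xs" using g Bij_imp_funcset by blast
    show ?thesis
      using f g TB[OF f] TB[OF g] gX ji jX iX
      by (auto simp: BijGroup_def T_def compose_def fun_eq_iff)
  qed
  have Tinj: "f = g" if f: "f \<in> Bij Xs" and g: "g \<in> Bij Xs" and e: "T f = T g" for f g
  proof -
    have "f x = g x" if x: "x \<in> Xs" for x
    proof -
      have "T f (\<iota> x) = T g (\<iota> x)" using e by simp
      then have "\<iota> (f x) = \<iota> (g x)" using x iX ji by (simp add: T_def)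
      moreover have "f x \<in> Xs" "g x \<in> Xs" using f g x Bij_imp_funcset by blast+
      ultimately show ?thesis using io by (meson bij_betw_imp_inj_on inj_onD)
    qed
    then show ?thesis using f g by (meson Bij_imp_extensional extensionalityI)
  qed
  have phB: "\<phi> x \<in> Bij Xs" if "x \<in> carrier G" for x
    using hom that by (auto simp: hom_def BijGroup_def)
  define \<psi> where "\<psi> = (\<lambda>x. T (\<phi> x))"
  define H where "H = \<psi> ` carrier G"
  have psihom: "\<psi> \<in> hom G (BijGroup B)"
  proof (rule homI)
    show "\<psi> x \<in> carrier (BijGroup B)" if "x \<in> carrier G" for x
      using TB[OF phB[OF that]] by (simp add: \<psi>_def BijGroup_def)
    show "\<psi> (x \<otimes>\<^bsub>G\<^esub> y) = \<psi> x \<otimes>\<^bsub>BijGroup B\<^esub> \<psi> y" if "x \<in> carrier G" "y \<in> carrier G" for x y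
      using that hom Tmult[OF phB phB] unfolding \<psi>_def hom_def by simp
  qed
  have gh: "group_hom G (BijGroup B) \<psi>"
    using psihom grp group_BijGroup by (simp add: group_hom_def group_hom_axioms_def)
  have sub: "subgroup H (BijGroup B)" unfolding H_def using group_hom.img_is_subgroup[OF gh] .
  have psinj: "inj_on \<psi> (carrier G)"
    using inj Tinj phB unfolding \<psi>_def inj_on_def by metis
  have "\<psi> \<in> iso G (BijGroup B\<lparr>carrier := H\<rparr>)"
  proof (rule isoI)
    show "\<psi> \<in> hom G (BijGroup B\<lparr>carrier := H\<rparr>)"
      using psihom unfolding hom_def H_def by auto
    show "bij_betw \<psi> (carrier G) (carrier (BijGroup B\<lparr>carrier := H\<rparr>))"
      using psinj unfolding H_def bij_betw_def by simp
  qed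
  then have "G \<cong> BijGroup B\<lparr>carrier := H\<rparr>" by (rule is_isoI)
  then have iso: "BijGroup B\<lparr>carrier := H\<rparr> \<cong> G" by (rule G.iso_sym)
  have thB: "\<theta> \<in> Bij Xs" and thc: "\<forall>x\<in>Xs. \<forall>y\<in>Xs. \<exists>g\<in>\<phi> ` carrier G. \<theta> x = g x \<and> \<theta> y = g y"
    using th1 unfolding two_closure_def by auto
  have "T \<theta> \<in> two_closure B H"
    unfolding two_closure_def
  proof (intro CollectI conjI ballI)
    show "T \<theta> \<in> Bij B" using TB[OF thB] .
    fix a b assume a: "a \<in> B" and b: "b \<in> B"
    obtain g where g: "g \<in> \<phi> ` carrier G" "\<theta> (j a) = g (j a)" "\<theta> (j b) = g (j b)"
      using thc jX[OF a] jX[OF b] by blast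
    then obtain h where h: "h \<in> carrier G" "g = \<phi> h" by blast
    have "\<psi> h \<in> H" unfolding H_def using h by blast
    moreover have "T \<theta> a = \<psi> h a" "T \<theta> b = \<psi> h b"
      using a b g h unfolding \<psi>_def T_def by auto
    ultimately show "\<exists>g\<in>H. T \<theta> a = g a \<and> T \<theta> b = g b" by blast
  qed
  moreover have "T \<theta> \<notin> H"
  proof
    assume "T \<theta> \<in> H"
    then obtain h where h: "h \<in> carrier G" "T \<theta> = T (\<phi> h)" unfolding H_def \<psi>_def by blast
    then have "\<theta> = \<phi> h" using Tinj[OF thB phB[OF h(1)]] by simp
    then show False using th2 h(1) by blast
  qed
  ultimately have "two_closure B H \<noteq> H" by blast
  then show ?thesis unfolding two_closed_group_def using sub iso by blast
qed

theorem mainTheorem12: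
  fixes G :: "('a, 'c) monoid_scheme" and p :: nat
  assumes "Factorial_Ring.prime p" and "odd p"
    and "group G" and "finite (carrier G)" and "\<exists>n. order G = p ^ n"
    and "infinite (UNIV :: 'b set)"
  shows "two_closed_group TYPE('b) G \<longleftrightarrow> cyclic_group G"
proof
  obtain n where ordG: "order G = p ^ n" using assms(5) by blast
  assume cl: "two_closed_group TYPE('b) G"
  show "cyclic_group G"
  proof (rule ccontr)
    assume nc: "\<not> cyclic_group G"
    obtain w x where wx: "w \<in> carrier G" "w \<noteq> \<one>\<^bsub>G\<^esub>" "w [^]\<^bsub>G\<^esub> p = \<one>\<^bsub>G\<^esub>"
      "\<forall>d\<in>carrier G. d \<otimes>\<^bsub>G\<^esub> w \<otimes>\<^bsub>G\<^esub> inv\<^bsub>G\<^esub> d \<in> cyc G w"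
      "x \<in> carrier G" "x [^]\<^bsub>G\<^esub> p = \<one>\<^bsub>G\<^esub>" "x \<notin> cyc G w" "x \<otimes>\<^bsub>G\<^esub> w = w \<otimes>\<^bsub>G\<^esub> x"
      "\<forall>d\<in>carrier G. \<exists>(a::nat) (b::nat). d \<otimes>\<^bsub>G\<^esub> x \<otimes>\<^bsub>G\<^esub> inv\<^bsub>G\<^esub> d = x [^]\<^bsub>G\<^esub> a \<otimes>\<^bsub>G\<^esub> w [^]\<^bsub>G\<^esub> b"
      using group.noncyclic_data[OF assms(3) assms(4) assms(1) assms(2) ordG nc] by blast
    obtain Xs :: "(nat \<times> 'a set) set" and ph th where
      c: "finite Xs" "ph \<in> hom G (BijGroup Xs)" "inj_on ph (carrier G)"
         "th \<in> two_closure Xs (ph ` carrier G)" "th \<notin> ph ` carrier G"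
      using group.construction[OF assms(3) assms(4) assms(1) wx(1-3) wx(4) wx(5-8) wx(9)] by blast
    have "\<not> two_closed_group TYPE('b) G"
      using not_closed_from_action[OF assms(3) assms(6) c(1) c(2) c(3) c(4) c(5)] .
    then show False using cl by simp
  qed
next
  obtain n where ordG: "order G = p ^ n" using assms(5) by blast
  assume "cyclic_group G"
  then show "two_closed_group TYPE('b) G"
    using cyclic_imp_closed[OF assms(1) assms(3) assms(4) ordG] by blast
qed

end
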